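(* Fix numbers $\alpha,\beta,\hat\alpha,\hat\beta>0$, and suppose it is not the case that both $\hat\beta\ge\beta$ and $\frac{\alpha}{\beta}\ge\frac{\hat\alpha}{\hat\beta}$. Then there exist a state-independent utility function $u\colon\mathbb{R}\to\mathbb{R}$ that is strictly increasing and weakly concave, a belief $\mu\in[0,1]$, and a nondegenerate interval $[\underline w,\overline w]\subset\mathbb{R}$ such that for every $w\in[\underline w,\overline w]$, $$\mu u(w+\hat\alpha)+(1-\mu)u(w-\hat\beta)\ >\ u(w)\ \ge\ \mu u(w+\alpha)+(1-\mu)u(w-\beta),$$ i.e. $\hat r\succ s\succeq r$ at every wealth in $[\underline w,\overline w]$.
   Context: Setting: two states $\{0,1\}$, belief $\mu=\mathbb{P}(\text{state }1)$. At wealth $w$, the safe action $s$ pays $0$ in both states; the risky action $r$ pays $\alpha$ in state $1$ and $-\beta$ in state $0$; the risky action $\hat r$ pays $\hat\alpha$ in state $1$ and $-\hat\beta$ in state $0$. A subjective expected utility maximizer with utility $u$ of terminal wealth ranks actions by expected utility of $w$ plus the payoff; $\succ$ denotes strict and $\succeq$ weak preference. *)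

theory Defs
  imports "HOL-Analysis.Analysis"
begin

end

theory Submission
  imports Defs
begin

lemma kink_concave:
  fixes K :: real assumes K: "K \<ge> 1"
  shows "concave_on UNIV (\<lambda>x. min x (K*x))"
  unfolding concave_on_iff
proof (intro conjI ballI allI impI)
  show "convex (UNIV::real set)" by simp
  fix x y u v :: real assume u: "u \<ge> 0" and v: "v \<ge> 0" and uv: "u + v = 1"
  have a: "u * min x (K*x) \<le> u * x" "u * min x (K*x) \<le> u * (K*x)"
    using u by (auto intro: mult_left_mono)
  have b: "v * min y (K*y) \<le> v * y" "v * min y (K*y) \<le> v * (K*y)"
    using v by (auto intro: mult_left_mono)
  show "u * min x (K*x) + v * min y (K*y) \<le> min (u *\<^sub>R x + v *\<^sub>R y) (K * (u *\<^sub>R x + v *\<^sub>R y))"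
    using a b by (simp add: algebra_simps)
qed

lemma kink_mono:
  fixes K :: real assumes K: "K \<ge> 1"
  shows "strict_mono (\<lambda>x. min x (K*x))"
  unfolding strict_mono_def
proof (intro allI impI)
  fix x y :: real assume "x < y"
  then have "K*x < K*y" using K by simp
  then show "min x (K*x) < min y (K*y)" using \<open>x < y\<close> by linarith
qed

theorem mainTheorem2:
  fixes \<alpha> \<beta> \<alpha>' \<beta>' :: real
  assumes "\<alpha> > 0" "\<beta> > 0" "\<alpha>' > 0" "\<beta>' > 0"
    and "\<not> (\<beta>' \<ge> \<beta> \<and> \<alpha> / \<beta> \<ge> \<alpha>' / \<beta>')"
  shows "\<exists>(u :: real \<Rightarrow> real) (\<mu> :: real) (wl :: real) (wh :: real).
           strict_mono u \<and> concave_on UNIV u \<and> \<mu> \<in> {0..1} \<and> wl < wh \<and>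
           (\<forall>w \<in> {wl..wh}.
              \<mu> * u (w + \<alpha>') + (1 - \<mu>) * u (w - \<beta>') > u w \<and>
              u w \<ge> \<mu> * u (w + \<alpha>) + (1 - \<mu>) * u (w - \<beta>))"
proof (cases "\<alpha> / \<beta> < \<alpha>' / \<beta>'")
  case True
  define \<mu> where "\<mu> = \<beta> / (\<alpha> + \<beta>)"
  have m1: "1 - \<mu> = \<alpha> / (\<alpha> + \<beta>)" using assms unfolding \<mu>_def by (simp add: field_simps)
  have cross: "\<alpha> * \<beta>' < \<alpha>' * \<beta>" using True assms by (simp add: field_simps)
  have e1: "\<mu> * \<alpha> - (1 - \<mu>) * \<beta> = 0" using m1 assms unfolding \<mu>_def by (simp add: field_simps)
  have e2: "\<mu> * \<alpha>' - (1 - \<mu>) * \<beta>' > 0"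
  proof -
    have "\<mu> * \<alpha>' - (1 - \<mu>) * \<beta>' = (\<beta> * \<alpha>' - \<alpha> * \<beta>') / (\<alpha> + \<beta>)"
    proof -
      have "\<mu> * \<alpha>' - (1 - \<mu>) * \<beta>' = \<beta> * \<alpha>' / (\<alpha> + \<beta>) - \<alpha> * \<beta>' / (\<alpha> + \<beta>)"
        unfolding m1 unfolding \<mu>_def by simp
      also have "\<dots> = (\<beta> * \<alpha>' - \<alpha> * \<beta>') / (\<alpha> + \<beta>)" by (simp add: diff_divide_distrib)
      finally show ?thesis .
    qed
    moreover have "\<beta> * \<alpha>' - \<alpha> * \<beta>' > 0" using cross by (simp add: mult.commute)
    moreover have "\<alpha> + \<beta> > 0" using assms by simp
    ultimately show ?thesis by simp
  qed
  have mu01: "\<mu> \<in> {0..1}" using assms unfolding \<mu>_def by (auto simp: field_simps)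
  have K: "(1::real) \<ge> 1" by simp
  show ?thesis
    apply (rule exI[of _ "\<lambda>x. min x (1*x)"], rule exI[of _ \<mu>], rule exI[of _ 0], rule exI[of _ 1])
    using kink_mono[OF K] kink_concave[OF K] mu01 e1 e2
    by (auto simp: algebra_simps)
next
  case False
  then have bb: "\<beta>' < \<beta>" using assms(5) by linarith
  define \<mu> where "\<mu> = 2*\<beta>' / (\<alpha>' + 2*\<beta>')"
  have m1: "1 - \<mu> = \<alpha>' / (\<alpha>' + 2*\<beta>')" using assms unfolding \<mu>_def by (simp add: field_simps)
  have m1p: "1 - \<mu> > 0" using m1 assms by simp
  have e2: "\<mu> * \<alpha>' - (1 - \<mu>) * \<beta>' > 0"
  proof -
    have "\<mu> * \<alpha>' - (1 - \<mu>) * \<beta>' = (\<alpha>' * \<beta>') / (\<alpha>' + 2*\<beta>')"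
    proof -
      have "\<mu> * \<alpha>' - (1 - \<mu>) * \<beta>' = 2*\<beta>' * \<alpha>' / (\<alpha>' + 2*\<beta>') - \<alpha>' * \<beta>' / (\<alpha>' + 2*\<beta>')"
        unfolding m1 unfolding \<mu>_def by simp
      also have "\<dots> = (\<alpha>' * \<beta>') / (\<alpha>' + 2*\<beta>')" by (simp add: diff_divide_distrib[symmetric])
      finally show ?thesis .
    qed
    then show ?thesis using assms by simp
  qed
  have mu01: "\<mu> \<in> {0..1}" using assms unfolding \<mu>_def by (auto simp: field_simps)
  define d where "d = (\<beta> - \<beta>') / 2"
  have d: "d > 0" using bb unfolding d_def by simp
  define K where "K = 1 + \<mu> * \<alpha> / ((1 - \<mu>) * d)"
  have mu0: "\<mu> \<ge> 0" using mu01 by simp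
  have K: "K \<ge> 1" unfolding K_def using mu0 m1p d assms by simp
  have Kd: "(1 - \<mu>) * (K - 1) * d = \<mu> * \<alpha>" unfolding K_def using m1p d by (simp add: field_simps)
  have main: "\<mu> * min (w + \<alpha>') (K * (w + \<alpha>')) + (1 - \<mu>) * min (w - \<beta>') (K * (w - \<beta>')) > min w (K * w) \<and>
      min w (K * w) \<ge> \<mu> * min (w + \<alpha>) (K * (w + \<alpha>)) + (1 - \<mu>) * min (w - \<beta>) (K * (w - \<beta>))"
    if w: "w \<in> {\<beta>'..\<beta>' + d}" for w
  proof
    have w1: "w \<ge> \<beta>'" "w \<le> \<beta>' + d" using w by auto
    have p1: "min (w + \<alpha>') (K * (w + \<alpha>')) = w + \<alpha>'"
      using K w1 assms mult_right_mono[OF K, of "w + \<alpha>'"] by auto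
    have p2: "min (w - \<beta>') (K * (w - \<beta>')) = w - \<beta>'"
      using K w1 assms mult_right_mono[OF K, of "w - \<beta>'"] by auto
    have p3: "min w (K * w) = w"
      using K w1 assms mult_right_mono[OF K, of "w"] by auto
    have p4: "min (w + \<alpha>) (K * (w + \<alpha>)) = w + \<alpha>"
      using K w1 assms mult_right_mono[OF K, of "w + \<alpha>"] by auto
    have wb: "w - \<beta> \<le> - d" using w1 unfolding d_def by (simp add: field_simps)
    have p5: "min (w - \<beta>) (K * (w - \<beta>)) = K * (w - \<beta>)"
      using K wb d mult_right_mono[OF K, of "\<beta> - w"] by (auto simp: algebra_simps)
    show "\<mu> * min (w + \<alpha>') (K * (w + \<alpha>')) + (1 - \<mu>) * min (w - \<beta>') (K * (w - \<beta>')) > min w (K * w)"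
      using e2 unfolding p1 p2 p3 by (simp add: algebra_simps)
    have q: "(1 - \<mu>) * (K - 1) * (w - \<beta>) \<le> (1 - \<mu>) * (K - 1) * (- d)"
      using wb m1p K by (intro mult_left_mono) auto
    have "\<mu> * (w + \<alpha>) + (1 - \<mu>) * (K * (w - \<beta>)) - w
        = \<mu> * \<alpha> - (1 - \<mu>) * \<beta> + (1 - \<mu>) * (K - 1) * (w - \<beta>)"
      by (simp add: algebra_simps)
    also have "\<dots> \<le> \<mu> * \<alpha> - (1 - \<mu>) * \<beta> - \<mu> * \<alpha>" using q Kd by simp
    also have "\<dots> \<le> 0" using m1p assms by simp
    finally show "min w (K * w) \<ge> \<mu> * min (w + \<alpha>) (K * (w + \<alpha>)) + (1 - \<mu>) * min (w - \<beta>) (K * (w - \<beta>))"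
      unfolding p3 p4 p5 by simp
  qed
  show ?thesis
    apply (rule exI[of _ "\<lambda>x. min x (K*x)"], rule exI[of _ \<mu>], rule exI[of _ \<beta>'], rule exI[of _ "\<beta>' + d"])
    using kink_mono[OF K] kink_concave[OF K] mu01 d main by auto
qed

end
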